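(* Let $C$ be a self-dual code over $\mathbb{Z}_4+u\mathbb{Z}_4$ of length $n$. Then (a) $\phi(C)$ is a formally self-dual code over $\mathbb{Z}_4$ of length $2n$; (b) $\mu(C)$ is a self-orthogonal code over $\mathbb{Z}_4$ of length $n$, and $\alpha(C)$ is a self-orthogonal code over $\mathbb{F}_2+u\mathbb{F}_2$; (c) if $\nu(C)$ is self-orthogonal, then $\phi(C)$ is a self-dual code over $\mathbb{Z}_4$ of length $2n$.
   Context: $\mathbb{Z}_4+u\mathbb{Z}_4$ is the commutative ring of characteristic $4$ with $u^2=0$; $\mathbb{F}_2+u\mathbb{F}_2$ is the commutative ring $\{0,1,u,1+u\}$ of characteristic $2$ with $u^2=0$. A linear code of length $n$ over a ring $R$ is an $R$-submodule of $R^n$; its dual is taken with respect to the Euclidean inner product $\sum_i x_iy_i$ in $R$; self-orthogonal means $C\subseteq C^\perp$, self-dual means $C=C^\perp$. A linear code over $\mathbb{Z}_4$ is formally self-dual if it has the same Lee weight enumerator as its dual (Lee weight on $\mathbb{Z}_4$: $0,1,2,1$ for $0,1,2,3$). Maps: $\phi:(\mathbb{Z}_4+u\mathbb{Z}_4)^n\to\mathbb{Z}_4^{2n}$, $\phi(\overline{a}+u\overline{b})=(\overline{b},\overline{a}+\overline{b})$; $\mu(\overline{a}+u\overline{b})=\overline{a}$; $\nu(\overline{a}+u\overline{b})=\overline{b}$ (for $\overline{a},\overline{b}\in\mathbb{Z}_4^n$); $\alpha$ is coordinatewise reduction modulo $2$ from $\mathbb{Z}_4+u\mathbb{Z}_4$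 to $\mathbb{F}_2+u\mathbb{F}_2$. *)

theory Defs
  imports Main "HOL-Library.Numeral_Type"
begin

section \<open>The rings R[u]/(u^2): elements a + u b, written DN a b\<close>

datatype 'a dnum = DN (re: 'a) (du: 'a)

instantiation dnum :: (comm_ring_1) comm_ring_1
begin
definition "0 = DN 0 0"
definition "1 = DN 1 0"
definition "x + y = DN (re x + re y) (du x + du y)"
definition "x - y = DN (re x - re y) (du x - du y)"
definition "- x = DN (- re x) (- du x)"
definition "x * y = DN (re x * re y) (re x * du y + du x * re y)"
instance
  by standard (auto simp: zero_dnum_def one_dnum_def plus_dnum_def minus_dnum_def
      uminus_dnum_def times_dnum_def algebra_simps intro: dnum.expand)
end

type_synonym Z4 = "4"
type_synonym F2 = "2"
type_synonym Z4u = "4 dnum"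
type_synonym F2u = "2 dnum"

definition vadd :: "'a::comm_ring_1 list \<Rightarrow> 'a list \<Rightarrow> 'a list" where
  "vadd x y = map2 (+) x y"

definition smul :: "'a::comm_ring_1 \<Rightarrow> 'a list \<Rightarrow> 'a list" where
  "smul r x = map ((*) r) x"

definition inner :: "'a::comm_ring_1 list \<Rightarrow> 'a list \<Rightarrow> 'a" where
  "inner x y = sum_list (map2 (*) x y)"

definition linear_code :: "nat \<Rightarrow> 'a::comm_ring_1 list set \<Rightarrow> bool" where
  "linear_code n C \<longleftrightarrow> C \<subseteq> {x. length x = n} \<and> replicate n 0 \<in> C \<and>
     (\<forall>x\<in>C. \<forall>y\<in>C. vadd x y \<in> C) \<and> (\<forall>r. \<forall>x\<in>C. smul r x \<in> C)"

definition dual_code :: "nat \<Rightarrow> 'a::comm_ring_1 list set \<Rightarrow> 'a list set" where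
  "dual_code n C = {y. length y = n \<and> (\<forall>x\<in>C. inner x y = 0)}"

definition self_orthogonal :: "nat \<Rightarrow> 'a::comm_ring_1 list set \<Rightarrow> bool" where
  "self_orthogonal n C \<longleftrightarrow> linear_code n C \<and> C \<subseteq> dual_code n C"

definition self_dual :: "nat \<Rightarrow> 'a::comm_ring_1 list set \<Rightarrow> bool" where
  "self_dual n C \<longleftrightarrow> linear_code n C \<and> C = dual_code n C"

definition lee :: "Z4 \<Rightarrow> nat" where
  "lee x = (if x = 0 then 0 else if x = 2 then 2 else 1)"

definition lee_wt :: "Z4 list \<Rightarrow> nat" where
  "lee_wt x = sum_list (map lee x)"

definition lee_count :: "Z4 list set \<Rightarrow> nat \<Rightarrow> nat" where
  "lee_count C w = card {c \<in> C. lee_wt c = w}"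

definition formally_self_dual :: "nat \<Rightarrow> Z4 list set \<Rightarrow> bool" where
  "formally_self_dual n C \<longleftrightarrow> linear_code n C \<and>
     (\<forall>w. lee_count C w = lee_count (dual_code n C) w)"

definition phi :: "Z4u list \<Rightarrow> Z4 list" where
  "phi x = map du x @ map2 (+) (map re x) (map du x)"

definition mu :: "Z4u list \<Rightarrow> Z4 list" where
  "mu x = map re x"

definition nu :: "Z4u list \<Rightarrow> Z4 list" where
  "nu x = map du x"

definition red2 :: "Z4 \<Rightarrow> F2" where
  "red2 x = of_int (Rep_bit0 x)"

definition alpha :: "Z4u list \<Rightarrow> F2u list" where
  "alpha x = map (\<lambda>z. DN (red2 (re z)) (red2 (du z))) x"

end

theory Submission
  imports Defs
begin

lemma z4_cases: "(x::4) = 0 \<or> x = 1 \<or> x = 2 \<or> x = 3"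
proof (cases x)
  case (of_int z)
  then have "z = 0 \<or> z = 1 \<or> z = 2 \<or> z = 3" by auto
  then show ?thesis using of_int by auto
qed

lemma f2_cases: "(x::2) = 0 \<or> x = 1"
proof (cases x)
  case (of_int z)
  then have "z = 0 \<or> z = 1" by auto
  then show ?thesis using of_int by auto
qed

lemma red2_vals: "red2 0 = 0" "red2 1 = 1" "red2 2 = 0" "red2 3 = 1"
  by (simp_all add: red2_def bit0.Rep_numeral bit0.Rep_0 bit0.Rep_1)
lemma red2_add: "red2 (x + y) = red2 x + red2 y"
  using z4_cases[of x] z4_cases[of y] by (auto simp: red2_def bit0.Rep_numeral bit0.Rep_0 bit0.Rep_1)
lemma red2_mult: "red2 (x * y) = red2 x * red2 y"
  using z4_cases[of x] z4_cases[of y] by (auto simp: red2_def bit0.Rep_numeral bit0.Rep_0 bit0.Rep_1)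
lemma red2_surj: "\<exists>q. red2 q = (p::2)"
  using f2_cases[of p] red2_vals by metis

lemma lee_uminus: "lee (- x) = lee x"
  using z4_cases[of x] by (auto simp: lee_def)

lemma dn_simps [simp]:
  "re (x + y) = re x + re y" "du (x + y) = du x + du y"
  "re (x * y) = re x * re y" "du (x * y) = re x * du y + du x * re y"
  "re 0 = 0" "du 0 = 0" "re (- x) = - re x" "du (-x) = - du x"
  by (simp_all add: plus_dnum_def times_dnum_def zero_dnum_def uminus_dnum_def)

lemma dn_eq0: "(x::'a::comm_ring_1 dnum) = 0 \<longleftrightarrow> re x = 0 \<and> du x = 0"
  by (cases x) (simp add: zero_dnum_def)

lemma inner_Nil [simp]: "inner [] y = 0" "inner x [] = 0"
  by (simp_all add: inner_def)
lemma inner_Cons [simp]: "inner (x # xs) (y # ys) = x * y + inner xs ys"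
  by (simp add: inner_def)

lemma inner_re: "re (inner x y) = inner (map re x) (map re y)"
  apply (induction x arbitrary: y) apply simp subgoal for a x y by (cases y) auto done
lemma inner_du: "du (inner x y) = inner (map re x) (map du y) + inner (map du x) (map re y)"
  apply (induction x arbitrary: y) apply simp subgoal for a x y by (cases y) (auto simp: algebra_simps) done

lemma inner_add_left: "length a = length b \<Longrightarrow> inner (map2 (+) a b) c = inner a c + inner b c"
proof (induction a arbitrary: b c)
  case Nil then show ?case by simp
next
  case (Cons x xs) then show ?case
    by (cases b; cases c) (auto simp: algebra_simps)
qed
lemma inner_commute: "inner a b = inner b a"
  apply (induction a arbitrary: b) apply simp subgoal for a x y by (cases y) (auto simp: algebra_simps) done
lemma inner_add_right: "length a = length b \<Longrightarrow> inner c (map2 (+) a b) = inner c a + inner c b"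
  using inner_add_left inner_commute by metis
lemma inner_uminus_left: "inner (map uminus a) c = - inner a c"
  apply (induction a arbitrary: c) apply simp subgoal for a x y by (cases y) (auto simp: algebra_simps) done
lemma inner_uminus_right: "inner c (map uminus a) = - inner c a"
  using inner_uminus_left inner_commute by metis
lemma inner_zero_left [simp]: "inner (map (\<lambda>_. 0) a) c = 0"
  apply (induction a arbitrary: c) apply simp subgoal for a x y by (cases y) auto done
lemma inner_uminus_comp_right: "inner c (map (uminus \<circ> f) a) = - inner c (map f a)"
  using inner_uminus_right[of c "map f a"] by simp
lemma aux_grp: "(R1::'a::ab_group_add) + R2 = 0 \<Longrightarrow> D1 + (D2 + R2) = 0 \<Longrightarrow> D1 + D2 = R1"
  by (metis add.assoc add.commute add_left_cancel)
lemma inner_append: "length a = length c \<Longrightarrow> inner (a @ b) (c @ d) = inner a c + inner b d"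
proof (induction a arbitrary: c)
  case Nil then show ?case by simp
next
  case (Cons x xs) then show ?case by (cases c) (auto simp: algebra_simps)
qed

lemma inner_alpha: "inner (alpha x) (alpha y) = DN (red2 (re (inner x y))) (red2 (du (inner x y)))"
proof (induction x arbitrary: y)
  case Nil then show ?case by (simp add: alpha_def zero_dnum_def red2_vals)
next
  case (Cons a xs) then show ?case
    by (cases y) (auto simp: alpha_def zero_dnum_def red2_vals red2_add red2_mult
        plus_dnum_def times_dnum_def)
qed

definition negfst :: "nat \<Rightarrow> Z4 list \<Rightarrow> Z4 list" where
  "negfst n y = map uminus (take n y) @ drop n y"

lemma negfst_negfst: "negfst n (negfst n y) = y"
  by (cases "n \<le> length y") (auto simp: negfst_def min_def)

lemma inj_negfst: "inj (negfst n)"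
  by (metis injI negfst_negfst)

lemma lee_wt_negfst: "lee_wt (negfst n y) = lee_wt y"
proof -
  have "lee_wt (negfst n y) = sum_list (map lee (take n y)) + sum_list (map lee (drop n y))"
    by (simp add: negfst_def lee_wt_def comp_def lee_uminus)
  also have "\<dots> = lee_wt y"
    by (metis append_take_drop_id lee_wt_def map_append sum_list_append)
  finally show ?thesis .
qed

lemma length_phi [simp]: "length (phi x) = 2 * length x"
  by (simp add: phi_def)
lemma take_phi: "take (length x) (phi x) = map du x"
  by (simp add: phi_def)
lemma drop_phi: "drop (length x) (phi x) = map2 (+) (map re x) (map du x)"
  by (simp add: phi_def)
lemma negfst_phi: "negfst (length x) (phi x) = map uminus (map du x) @ map2 (+) (map re x) (map du x)"
  by (simp add: negfst_def take_phi drop_phi)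

lemma inner_phi: "length x = length y \<Longrightarrow> inner (phi x) (phi y) =
   inner (map re x) (map re y) + (inner (map re x) (map du y) + inner (map du x) (map re y))
   + 2 * inner (map du x) (map du y)"
  by (simp add: phi_def inner_append inner_add_left inner_add_right algebra_simps)

lemma inner_phi_negfst: "length x = length y \<Longrightarrow> inner (phi x) (negfst (length y) (phi y)) =
   inner (map re x) (map re y) + (inner (map re x) (map du y) + inner (map du x) (map re y))"
  unfolding negfst_phi unfolding phi_def
  by (simp add: inner_append inner_add_left inner_add_right
     inner_uminus_right inner_uminus_comp_right algebra_simps)

lemma phi_vadd: "length x = length y \<Longrightarrow> vadd (phi x) (phi y) = phi (vadd x y)"
  by (simp add: list_eq_iff_nth_eq vadd_def phi_def nth_append algebra_simps)
lemma phi_smul: "smul r (phi x) = phi (smul (DN r 0) x)"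
  by (simp add: list_eq_iff_nth_eq smul_def phi_def nth_append algebra_simps times_dnum_def)
lemma phi_zero: "phi (replicate n 0) = replicate (2*n) 0"
  by (simp add: list_eq_iff_nth_eq phi_def nth_append)
lemma mu_vadd: "vadd (mu x) (mu y) = mu (vadd x y)"
  by (simp add: list_eq_iff_nth_eq vadd_def mu_def)
lemma mu_smul: "smul r (mu x) = mu (smul (DN r 0) x)"
  by (simp add: list_eq_iff_nth_eq smul_def mu_def times_dnum_def)
lemma mu_zero: "mu (replicate n 0) = replicate n 0"
  by (simp add: list_eq_iff_nth_eq mu_def)
lemma alpha_vadd: "vadd (alpha x) (alpha y) = alpha (vadd x y)"
  by (simp add: list_eq_iff_nth_eq vadd_def alpha_def plus_dnum_def red2_add)
lemma alpha_smul: "red2 p' = p \<Longrightarrow> red2 q' = q \<Longrightarrow> smul (DN p q) (alpha x) = alpha (smul (DN p' q') x)"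
  by (simp add: list_eq_iff_nth_eq smul_def alpha_def times_dnum_def red2_add red2_mult)
lemma alpha_zero: "alpha (replicate n 0) = replicate n 0"
  by (simp add: list_eq_iff_nth_eq alpha_def zero_dnum_def red2_vals)

lemma length_alpha: "length (alpha x) = length x" by (simp add: alpha_def)

locale sdc =
  fixes n :: nat and C :: "Z4u list set"
  assumes sd: "self_dual n C"
begin

lemma lin: "linear_code n C" using sd by (simp add: self_dual_def)
lemma len: "x \<in> C \<Longrightarrow> length x = n" using lin by (auto simp: linear_code_def)
lemma orth: "x \<in> C \<Longrightarrow> y \<in> C \<Longrightarrow> inner x y = 0"
  using sd by (auto simp: self_dual_def dual_code_def)
lemma orth_re: "x \<in> C \<Longrightarrow> y \<in> C \<Longrightarrow> inner (map re x) (map re y) = 0"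
  using orth inner_re by (metis dn_simps(5))
lemma orth_du: "x \<in> C \<Longrightarrow> y \<in> C \<Longrightarrow>
   inner (map re x) (map du y) + inner (map du x) (map re y) = 0"
  using orth inner_du by (metis dn_simps(6))
lemma closed: "length y = n \<Longrightarrow> (\<And>x. x \<in> C \<Longrightarrow> inner x y = 0) \<Longrightarrow> y \<in> C"
  using sd unfolding self_dual_def dual_code_def by blast
lemma ux: "x \<in> C \<Longrightarrow> map (\<lambda>z. DN 0 (re z)) x \<in> C"
proof -
  assume "x \<in> C"
  then have "smul (DN 0 1) x \<in> C" using lin by (auto simp: linear_code_def)
  moreover have "smul (DN 0 1) x = map (\<lambda>z. DN 0 (re z)) x"
    by (simp add: smul_def times_dnum_def)
  ultimately show ?thesis by simp
qed

lemma dual_phi: "dual_code (2*n) (phi ` C) = negfst n ` phi ` C"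
proof
  show "negfst n ` phi ` C \<subseteq> dual_code (2*n) (phi ` C)"
  proof
    fix v assume "v \<in> negfst n ` phi ` C"
    then obtain y where y: "y \<in> C" "v = negfst n (phi y)" by auto
    have "length v = 2 * n" using y len by (simp add: negfst_def)
    moreover have "inner w v = 0" if "w \<in> phi ` C" for w
    proof -
      from that obtain x where x: "x \<in> C" "w = phi x" by auto
      show ?thesis using inner_phi_negfst[of x y] x y len orth_re orth_du by simp
    qed
    ultimately show "v \<in> dual_code (2*n) (phi ` C)" by (simp add: dual_code_def)
  qed
next
  show "dual_code (2*n) (phi ` C) \<subseteq> negfst n ` phi ` C"
  proof
    fix v assume v: "v \<in> dual_code (2*n) (phi ` C)"
    define y1 where "y1 = take n v"
    define y2 where "y2 = drop n v"
    have lv: "length v = 2 * n" using v by (simp add: dual_code_def)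
    have l1: "length y1 = n" and l2: "length y2 = n" using lv by (simp_all add: y1_def y2_def)
    have vy: "v = y1 @ y2" by (simp add: y1_def y2_def)
    have H: "inner (map du x) y1 + inner (map re x) y2 + inner (map du x) y2 = 0" if "x \<in> C" for x
    proof -
      have "inner (phi x) v = 0" using v that by (auto simp: dual_code_def)
      then show ?thesis using len[OF that] l1 l2 vy
        by (simp add: phi_def inner_append inner_add_left algebra_simps)
    qed
    have Hu: "inner (map re x) y1 + inner (map re x) y2 = 0" if "x \<in> C" for x
    proof -
      have "map2 (+) (map re (map (\<lambda>z. DN 0 (re z)) x)) (map du (map (\<lambda>z. DN 0 (re z)) x)) = map re x"
        by (induction x) auto
      then show ?thesis using H[OF ux[OF that]]
        by (simp add: inner_add_left comp_def)
    qed
    define z where "z = map2 DN (map2 (+) y1 y2) (map uminus y1)"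
    have lz: "length z = n" using l1 l2 by (simp add: z_def)
    have zre: "map re z = map2 (+) y1 y2" using l1 l2 unfolding z_def
      by (simp add: list_eq_iff_nth_eq)
    have zdu: "map du z = map uminus y1" using l1 l2 unfolding z_def
      by (simp add: list_eq_iff_nth_eq)
    have zC: "z \<in> C"
    proof (rule closed[OF lz])
      fix x assume x: "x \<in> C"
      have lx: "length x = n" using len x by simp
      have "re (inner x z) = 0"
        using Hu[OF x] by (simp add: inner_re zre inner_add_right l1 l2)
      moreover have "du (inner x z) = 0"
        using Hu[OF x] H[OF x] by (simp add: inner_du zre zdu inner_add_right l1 l2
            inner_uminus_right inner_uminus_comp_right algebra_simps) (metis aux_grp)
      ultimately show "inner x z = 0" by (simp add: dn_eq0)
    qed
    have "negfst n (phi z) = v"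
    proof -
      have "negfst n (phi z) = map uminus (map uminus y1) @ map2 (+) (map2 (+) y1 y2) (map uminus y1)"
        using negfst_phi[of z] lz zre zdu by simp
      also have "\<dots> = y1 @ y2"
      proof -
        have "map2 (+) (map2 (+) y1 y2) (map uminus y1) = y2"
          using l1 l2 by (simp add: list_eq_iff_nth_eq)
        then show ?thesis by simp
      qed
      finally show ?thesis using vy by simp
    qed
    then show "v \<in> negfst n ` phi ` C" using zC by blast
  qed
qed

lemma lin_phi: "linear_code (2*n) (phi ` C)"
  unfolding linear_code_def
proof (intro conjI ballI allI)
  show "phi ` C \<subseteq> {x. length x = 2 * n}" using len by auto
  show "replicate (2*n) 0 \<in> phi ` C"
    using lin phi_zero[of n] by (metis image_eqI linear_code_def)
  fix x y assume "x \<in> phi ` C" "y \<in> phi ` C"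
  then obtain a b where "a \<in> C" "b \<in> C" "x = phi a" "y = phi b" by auto
  then show "vadd x y \<in> phi ` C" using phi_vadd[of a b] len lin
    by (metis image_eqI linear_code_def)
next
  fix r and x :: "Z4 list" assume "x \<in> phi ` C"
  then obtain a where "a \<in> C" "x = phi a" by auto
  then show "smul r x \<in> phi ` C" using phi_smul[of r a] lin
    by (metis image_eqI linear_code_def)
qed

lemma fsd: "formally_self_dual (2*n) (phi ` C)"
  unfolding formally_self_dual_def
proof (intro conjI allI)
  show "linear_code (2*n) (phi ` C)" by (rule lin_phi)
  fix w
  have "{c \<in> negfst n ` phi ` C. lee_wt c = w} = negfst n ` {c \<in> phi ` C. lee_wt c = w}"
    using lee_wt_negfst by auto
  then have "lee_count (negfst n ` phi ` C) w = lee_count (phi ` C) w"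
    unfolding lee_count_def
    by (metis (no_types, lifting) card_image inj_negfst inj_on_subset subset_UNIV)
  then show "lee_count (phi ` C) w = lee_count (dual_code (2 * n) (phi ` C)) w"
    by (simp add: dual_phi)
qed

lemma mu_so: "self_orthogonal n (mu ` C)"
  unfolding self_orthogonal_def linear_code_def
proof (intro conjI ballI allI)
  show "mu ` C \<subseteq> {x. length x = n}" using len by (auto simp: mu_def)
  show "replicate n 0 \<in> mu ` C"
    using lin mu_zero[of n] by (metis image_eqI linear_code_def)
  fix x y assume "x \<in> mu ` C" "y \<in> mu ` C"
  then obtain a b where "a \<in> C" "b \<in> C" "x = mu a" "y = mu b" by auto
  then show "vadd x y \<in> mu ` C" using mu_vadd[of a b] lin
    by (metis image_eqI linear_code_def)
next
  fix r and x :: "Z4 list" assume "x \<in> mu ` C"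
  then obtain a where "a \<in> C" "x = mu a" by auto
  then show "smul r x \<in> mu ` C" using mu_smul[of r a] lin
    by (metis image_eqI linear_code_def)
next
  show "mu ` C \<subseteq> dual_code n (mu ` C)"
    using len orth_re by (auto simp: dual_code_def mu_def)
qed

lemma alpha_so: "self_orthogonal n (alpha ` C)"
  unfolding self_orthogonal_def linear_code_def
proof (intro conjI ballI allI)
  show "alpha ` C \<subseteq> {x. length x = n}" using len by (auto simp: alpha_def)
  show "replicate n 0 \<in> alpha ` C"
    using lin alpha_zero[of n] by (metis image_eqI linear_code_def)
  fix x y assume "x \<in> alpha ` C" "y \<in> alpha ` C"
  then obtain a b where "a \<in> C" "b \<in> C" "x = alpha a" "y = alpha b" by auto
  then show "vadd x y \<in> alpha ` C" using alpha_vadd[of a b] lin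
    by (metis image_eqI linear_code_def)
next
  fix r :: F2u and x :: "F2u list" assume "x \<in> alpha ` C"
  then obtain a where a: "a \<in> C" "x = alpha a" by auto
  obtain p q :: F2 where r: "r = DN p q" by (cases r)
  obtain p' q' where "red2 p' = p" "red2 q' = q" using red2_surj by metis
  then show "smul r x \<in> alpha ` C" using alpha_smul[of p' p q' q a] lin a r
    by (metis image_eqI linear_code_def)
next
  show "alpha ` C \<subseteq> dual_code n (alpha ` C)"
    using len orth by (auto simp: dual_code_def inner_alpha red2_vals zero_dnum_def length_alpha)
qed

lemma part_c: "self_orthogonal n (nu ` C) \<Longrightarrow> self_dual (2 * n) (phi ` C)"
proof -
  assume so: "self_orthogonal n (nu ` C)"
  have nuo: "inner (map du x) (map du y) = 0" if "x \<in> C" "y \<in> C" for x y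
    using so that by (auto simp: self_orthogonal_def dual_code_def nu_def)
  have sub: "phi ` C \<subseteq> negfst n ` phi ` C"
  proof -
    have "phi ` C \<subseteq> dual_code (2*n) (phi ` C)"
    proof
      fix v assume "v \<in> phi ` C"
      then obtain y where y: "y \<in> C" "v = phi y" by auto
      have "inner w v = 0" if "w \<in> phi ` C" for w
      proof -
        from that obtain x where x: "x \<in> C" "w = phi x" by auto
        show ?thesis using inner_phi[of x y] x y len orth_re orth_du nuo by simp
      qed
      then show "v \<in> dual_code (2*n) (phi ` C)" using y len by (simp add: dual_code_def)
    qed
    then show ?thesis by (simp add: dual_phi)
  qed
  have "negfst n ` phi ` C \<subseteq> phi ` C"
  proof
    fix v assume "v \<in> negfst n ` phi ` C"
    then obtain y where y: "y \<in> C" "v = negfst n (phi y)" by auto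
    then obtain y' where "y' \<in> C" "phi y = negfst n (phi y')" using sub by blast
    then show "v \<in> phi ` C" using y negfst_negfst by auto
  qed
  with sub have "phi ` C = dual_code (2*n) (phi ` C)" by (simp add: dual_phi)
  then show ?thesis using lin_phi by (simp add: self_dual_def)
qed

end

theorem theorem4p4:
  fixes C :: "Z4u list set" and n :: nat
  assumes "self_dual n C"
  shows "formally_self_dual (2 * n) (phi ` C) \<and>
         self_orthogonal n (mu ` C) \<and> self_orthogonal n (alpha ` C) \<and>
         (self_orthogonal n (nu ` C) \<longrightarrow> self_dual (2 * n) (phi ` C))"
proof -
  interpret sdc n C using assms by unfold_locales
  show ?thesis using fsd mu_so alpha_so part_c by blast
qed

end
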